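(* Let $f$ satisfy Hypothesis 1 or Hypothesis 2 (see context), let $\eta\in(0,1]$, $\theta\in(1-\alpha,+\infty)$, and let $(\rho_1,\rho_2)$ be a classical solution of the viscous system (see context) with $\rho_{1,0},\rho_{2,0}\in\mathscr{P}(\Omega)$ and $\sigma_0^{-\theta}\in L^1(\Omega)$, where $\sigma_0=\rho_{1,0}+\rho_{2,0}$ and $\sigma=\rho_1+\rho_2$. Then there exists $\mathcal{K}_{2,\theta}>0$, depending only on $\alpha,\kappa,\theta,|\Omega|,T$, $\|\sigma_0^{-\theta}\|_{L^1(\Omega)}$ and the Lipschitz constants of $V_1,V_2$ (in particular independent of $\eta$), such that \[ \|\sigma^{-\theta}\|_{L^\infty([0,T];L^1(\Omega))}+\big\|\partial_x\sigma^{\frac{\alpha-1-\theta}{2}}\big\|_{L^2([0,T]\times\Omega)}<\mathcal{K}_{2,\theta}. \]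
   Context: $\Omega=(0,L)$, $T>0$. Hypothesis 1: (H1) $f(s)=\frac{\lambda}{\alpha-1}s^\alpha$ with $\alpha\in(0,1)$, $\lambda>0$; or (H2) $f(s)=\lambda s\log s$, $\lambda>0$. Hypothesis 2: (I1) $f\in C^{4,\beta}_{loc}(0,\infty)$ for some $\beta\in(0,1]$, $f''>0$; (I2) $\frac{1}{\alpha\kappa}s^\alpha\le s^2f''(s)$ for $s>0$, with $\alpha\in(0,1)$, $\kappa>0$; (I3) $|sf'''(s)/f''(s)|\le\kappa$; (I4) $\int_\Omega f(\mu)\,dx>-\mathcal{K}_{\inf}$ for all $\mu\in\mathscr{P}^{ac}(\Omega)$. When $f$ is as in Hypothesis 1, $\alpha,\kappa$ denote the corresponding constants determined by $f$. Viscous system, for $\eta\in(0,1]$, $i\in\{1,2\}$: $\partial_t\rho_i=\eta\partial_{xx}\rho_i+\partial_x(\rho_i\partial_x(f'(\rho_1+\rho_2)+V_i))$ in $(0,T)\times\Omega$, $\rho_i(0)=\rho_{i,0}$, $\eta\partial_x\rho_i+\rho_i\partial_x(f'(\rho_1+\rho_2)+V_i)=0$ on $(0,T)\times\partial\Omega$. Standing assumptions: $V_1,V_2\in C^{3,1}(\overline\Omega)$ with $\partial_xV_1=\partial_xV_2=0$ on $\partial\Omega$; $\rho_{i,0}\in C^{3,1}(\overline\Omega)$ probability densities with $\rho_{1,0}+\rho_{2,0}>0$ on $\overline\Omega$ satisfying the zeroth- and first-order boundary compatibility conditions; $f\in C^{4,\beta}_{loc}(0,\infty)$, $f''\ge0$.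 A classical solution is a pair $\rho_1,\rho_2\in C([0,T];C^3(\overline\Omega))\cap C^1([0,T];C^1(\overline\Omega))$ satisfying the system pointwise, with $\rho_1+\rho_2>0$. *)

theory Defs
  imports "HOL-Analysis.Analysis"
begin

definition dX :: "real \<Rightarrow> (real \<Rightarrow> real) \<Rightarrow> real \<Rightarrow> real" where
  "dX L g = (\<lambda>x. vector_derivative g (at x within {0..L}))"

definition Dx :: "real \<Rightarrow> (real \<Rightarrow> real \<Rightarrow> real) \<Rightarrow> real \<Rightarrow> real \<Rightarrow> real" where
  "Dx L u = (\<lambda>t x. vector_derivative (u t) (at x within {0..L}))"

definition Dt :: "real \<Rightarrow> (real \<Rightarrow> real \<Rightarrow> real) \<Rightarrow> real \<Rightarrow> real \<Rightarrow> real" where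
  "Dt T u = (\<lambda>t x. vector_derivative (\<lambda>s. u s x) (at t within {0..T}))"

definition C_on :: "nat \<Rightarrow> real \<Rightarrow> (real \<Rightarrow> real) \<Rightarrow> bool" where
  "C_on n L g \<longleftrightarrow>
     (\<forall>k<n. \<forall>x\<in>{0..L}. ((dX L ^^ k) g) differentiable (at x within {0..L})) \<and>
     continuous_on {0..L} ((dX L ^^ n) g)"

definition C31_on :: "real \<Rightarrow> (real \<Rightarrow> real) \<Rightarrow> bool" where
  "C31_on L g \<longleftrightarrow> C_on 3 L g \<and> (\<exists>C. lipschitz_on C {0..L} ((dX L ^^ 3) g))"

definition prob_density :: "real \<Rightarrow> (real \<Rightarrow> real) \<Rightarrow> bool" where
  "prob_density L g \<longleftrightarrow> (\<forall>x\<in>{0..L}. 0 \<le> g x) \<and> g integrable_on {0..L}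
      \<and> integral {0..L} g = 1"

definition C4beta_loc :: "(real \<Rightarrow> real) \<Rightarrow> real \<Rightarrow> bool" where
  "C4beta_loc f \<beta> \<longleftrightarrow>
     (\<forall>k<4. \<forall>s>0. ((deriv ^^ k) f) differentiable (at s)) \<and>
     continuous_on {0<..} ((deriv ^^ 4) f) \<and>
     (\<forall>a b. 0 < a \<longrightarrow> a \<le> b \<longrightarrow> (\<exists>C. \<forall>x\<in>{a..b}. \<forall>y\<in>{a..b}.
         \<bar>(deriv ^^ 4) f x - (deriv ^^ 4) f y\<bar> \<le> C * \<bar>x - y\<bar> powr \<beta>))"

definition H1 :: "real \<Rightarrow> (real \<Rightarrow> real) \<Rightarrow> bool" where
  "H1 \<alpha> f \<longleftrightarrow> 0 < \<alpha> \<and> \<alpha> < 1 \<and>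
     (\<exists>lam>0. \<forall>s>0. f s = lam / (\<alpha> - 1) * s powr \<alpha>)"

definition H2 :: "(real \<Rightarrow> real) \<Rightarrow> bool" where
  "H2 f \<longleftrightarrow> (\<exists>lam>0. \<forall>s>0. f s = lam * s * ln s)"

definition I2 :: "real \<Rightarrow> real \<Rightarrow> (real \<Rightarrow> real) \<Rightarrow> bool" where
  "I2 \<alpha> \<kappa> f \<longleftrightarrow> (\<forall>s>0. 1 / (\<alpha> * \<kappa>) * s powr \<alpha> \<le> s\<^sup>2 * (deriv ^^ 2) f s)"

definition I3 :: "real \<Rightarrow> (real \<Rightarrow> real) \<Rightarrow> bool" where
  "I3 \<kappa> f \<longleftrightarrow> (\<forall>s>0. \<bar>s * (deriv ^^ 3) f s / (deriv ^^ 2) f s\<bar> \<le> \<kappa>)"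

definition I4 :: "real \<Rightarrow> (real \<Rightarrow> real) \<Rightarrow> bool" where
  "I4 L f \<longleftrightarrow> (\<exists>Kinf. \<forall>\<mu>. prob_density L \<mu> \<longrightarrow> (\<lambda>x. f (\<mu> x)) integrable_on {0..L}
       \<longrightarrow> integral {0..L} (\<lambda>x. f (\<mu> x)) > - Kinf)"

definition Hyp2 :: "real \<Rightarrow> real \<Rightarrow> real \<Rightarrow> (real \<Rightarrow> real) \<Rightarrow> bool" where
  "Hyp2 L \<alpha> \<kappa> f \<longleftrightarrow> (\<exists>\<beta>. 0 < \<beta> \<and> \<beta> \<le> 1 \<and> C4beta_loc f \<beta>) \<and>
     (\<forall>s>0. (deriv ^^ 2) f s > 0) \<and> 0 < \<alpha> \<and> \<alpha> < 1 \<and> 0 < \<kappa> \<and>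
     I2 \<alpha> \<kappa> f \<and> I3 \<kappa> f \<and> I4 L f"

definition f_hyp :: "real \<Rightarrow> real \<Rightarrow> real \<Rightarrow> (real \<Rightarrow> real) \<Rightarrow> bool" where
  "f_hyp L \<alpha> \<kappa> f \<longleftrightarrow>
     ((H1 \<alpha> f \<or> (H2 f \<and> \<alpha> = 1)) \<and> 0 < \<kappa> \<and> I2 \<alpha> \<kappa> f \<and> I3 \<kappa> f) \<or> Hyp2 L \<alpha> \<kappa> f"

definition pressure :: "(real \<Rightarrow> real) \<Rightarrow> (real \<Rightarrow> real) \<Rightarrow> (real \<Rightarrow> real \<Rightarrow> real)
    \<Rightarrow> (real \<Rightarrow> real \<Rightarrow> real) \<Rightarrow> real \<Rightarrow> real \<Rightarrow> real" where
  "pressure f V u1 u2 = (\<lambda>t x. deriv f (u1 t x + u2 t x) + V x)"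

definition flux :: "real \<Rightarrow> (real \<Rightarrow> real) \<Rightarrow> real \<Rightarrow> (real \<Rightarrow> real) \<Rightarrow> (real \<Rightarrow> real \<Rightarrow> real)
    \<Rightarrow> (real \<Rightarrow> real \<Rightarrow> real) \<Rightarrow> (real \<Rightarrow> real \<Rightarrow> real) \<Rightarrow> real \<Rightarrow> real \<Rightarrow> real" where
  "flux L f \<eta> V ui u1 u2 = (\<lambda>t x. \<eta> * Dx L ui t x + ui t x * Dx L (pressure f V u1 u2) t x)"

text \<open>Regularity C([0,T];C^3([0,L])) \<inter> C^1([0,T];C^1([0,L])), expressed through
  joint continuity of the partial derivatives on the compact set [0,T] x [0,L].\<close>
definition classical_reg :: "real \<Rightarrow> real \<Rightarrow> (real \<Rightarrow> real \<Rightarrow> real) \<Rightarrow> bool" where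
  "classical_reg L T u \<longleftrightarrow>
     (\<forall>t\<in>{0..T}. \<forall>k<3. \<forall>x\<in>{0..L}. ((Dx L ^^ k) u t) differentiable (at x within {0..L})) \<and>
     (\<forall>k\<le>3. continuous_on ({0..T} \<times> {0..L}) (\<lambda>(t,x). (Dx L ^^ k) u t x)) \<and>
     (\<forall>t\<in>{0..T}. \<forall>x\<in>{0..L}. (\<lambda>s. u s x) differentiable (at t within {0..T})) \<and>
     (\<forall>t\<in>{0..T}. \<forall>x\<in>{0..L}. (Dt T u t) differentiable (at x within {0..L})) \<and>
     continuous_on ({0..T} \<times> {0..L}) (\<lambda>(t,x). Dt T u t x) \<and>
     continuous_on ({0..T} \<times> {0..L}) (\<lambda>(t,x). Dx L (Dt T u) t x)"

definition component_eq :: "real \<Rightarrow> real \<Rightarrow> (real \<Rightarrow> real) \<Rightarrow> real \<Rightarrow> (real \<Rightarrow> real)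
    \<Rightarrow> (real \<Rightarrow> real \<Rightarrow> real) \<Rightarrow> (real \<Rightarrow> real \<Rightarrow> real) \<Rightarrow> (real \<Rightarrow> real \<Rightarrow> real) \<Rightarrow> bool" where
  "component_eq L T f \<eta> V ui u1 u2 \<longleftrightarrow>
     (\<forall>t\<in>{0<..<T}. \<forall>x\<in>{0..L}. (pressure f V u1 u2 t) differentiable (at x within {0..L})) \<and>
     (\<forall>t\<in>{0<..<T}. \<forall>x\<in>{0<..<L}.
        (flux L f \<eta> V ui u1 u2 t) differentiable (at x within {0..L}) \<and>
        Dt T ui t x = Dx L (flux L f \<eta> V ui u1 u2) t x) \<and>
     (\<forall>t\<in>{0<..<T}. flux L f \<eta> V ui u1 u2 t 0 = 0 \<and> flux L f \<eta> V ui u1 u2 t L = 0)"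

definition classical_solution :: "real \<Rightarrow> real \<Rightarrow> (real \<Rightarrow> real) \<Rightarrow> real
    \<Rightarrow> (real \<Rightarrow> real) \<Rightarrow> (real \<Rightarrow> real) \<Rightarrow> (real \<Rightarrow> real) \<Rightarrow> (real \<Rightarrow> real)
    \<Rightarrow> (real \<Rightarrow> real \<Rightarrow> real) \<Rightarrow> (real \<Rightarrow> real \<Rightarrow> real) \<Rightarrow> bool" where
  "classical_solution L T f \<eta> V1 V2 r10 r20 r1 r2 \<longleftrightarrow>
     classical_reg L T r1 \<and> classical_reg L T r2 \<and>
     (\<forall>t\<in>{0..T}. \<forall>x\<in>{0..L}. r1 t x + r2 t x > 0) \<and>
     (\<forall>x\<in>{0..L}. r1 0 x = r10 x \<and> r2 0 x = r20 x) \<and>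
     component_eq L T f \<eta> V1 r1 r1 r2 \<and> component_eq L T f \<eta> V2 r2 r1 r2"

text \<open>Zeroth- and first-order boundary compatibility conditions for the initial data
  (time-independent lifts a_i(t,x) = rho_{i,0}(x)).  The first-order condition is the
  time-differentiated no-flux condition at t = 0, where d_t rho_i is replaced by
  G_i = d_x(flux_i) from the equation.\<close>
definition compat0 :: "real \<Rightarrow> (real \<Rightarrow> real) \<Rightarrow> real \<Rightarrow> (real \<Rightarrow> real) \<Rightarrow> (real \<Rightarrow> real)
    \<Rightarrow> (real \<Rightarrow> real) \<Rightarrow> (real \<Rightarrow> real) \<Rightarrow> bool" where
  "compat0 L f \<eta> V1 V2 a1 a2 \<longleftrightarrow>
     (let u1 = (\<lambda>t. a1); u2 = (\<lambda>t. a2) in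
       \<forall>x\<in>{0, L}. flux L f \<eta> V1 u1 u1 u2 0 x = 0 \<and> flux L f \<eta> V2 u2 u1 u2 0 x = 0)"

definition compat1 :: "real \<Rightarrow> (real \<Rightarrow> real) \<Rightarrow> real \<Rightarrow> (real \<Rightarrow> real) \<Rightarrow> (real \<Rightarrow> real)
    \<Rightarrow> (real \<Rightarrow> real) \<Rightarrow> (real \<Rightarrow> real) \<Rightarrow> bool" where
  "compat1 L f \<eta> V1 V2 a1 a2 \<longleftrightarrow>
     (let u1 = (\<lambda>t. a1); u2 = (\<lambda>t. a2);
          G1 = Dx L (flux L f \<eta> V1 u1 u1 u2);
          G2 = Dx L (flux L f \<eta> V2 u2 u1 u2);
          Q = (\<lambda>t x. (deriv ^^ 2) f (u1 t x + u2 t x) * (G1 t x + G2 t x)) in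
       \<forall>x\<in>{0, L}.
         \<eta> * Dx L G1 0 x + G1 0 x * Dx L (pressure f V1 u1 u2) 0 x + u1 0 x * Dx L Q 0 x = 0 \<and>
         \<eta> * Dx L G2 0 x + G2 0 x * Dx L (pressure f V2 u1 u2) 0 x + u2 0 x * Dx L Q 0 x = 0)"

end

theory Submission
  imports Defs
begin

lemma at_within_Icc_interior:
  fixes x a b :: real
  assumes "x \<in> {a<..<b}"
  shows "at x within {a..b} = at x"
  using assms by (intro at_within_interior) simp

lemma lip_deriv_bound:
  fixes V :: "real \<Rightarrow> real"
  assumes lip: "lipschitz_on l {a..b} V" and ab: "a < b" and x: "x \<in> {a..b}"
    and d: "(V has_real_derivative d) (at x within {a..b})"
  shows "\<bar>d\<bar> \<le> l"
proof -
  have lim: "((\<lambda>y. (V y - V x) / (y - x)) \<longlongrightarrow> d) (at x within {a..b})"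
    using d by (simp add: has_field_derivative_iff)
  have nt: "\<not> trivial_limit (at x within {a..b})"
    using ab x by (auto simp: trivial_limit_within)
  have ev: "eventually (\<lambda>y. norm ((V y - V x) / (y - x)) \<le> l) (at x within {a..b})"
    unfolding eventually_at_filter
  proof (intro always_eventually allI impI)
    fix y assume y: "y \<noteq> x" "y \<in> {a..b}"
    have "\<bar>V y - V x\<bar> \<le> l * \<bar>y - x\<bar>"
      using lip y x unfolding lipschitz_on_def dist_real_def by blast
    then show "norm ((V y - V x) / (y - x)) \<le> l"
      using y by (simp add: abs_divide divide_le_eq)
  qed
  show ?thesis using Lim_norm_ubound[OF nt lim ev] by simp
qed

lemma deriv_split:
  fixes g :: "real \<Rightarrow> real"
  assumes "(g has_real_derivative d) (at x within {..x})"
    and "(g has_real_derivative d) (at x within {x..})"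
  shows "(g has_real_derivative d) (at x)"
proof -
  have u: "{..x} \<union> {x..} = (UNIV::real set)" by auto
  have "((\<lambda>y. (g y - g x) / (y - x)) \<longlongrightarrow> d) (at x within ({..x} \<union> {x..}))"
    using assms by (simp add: has_field_derivative_iff Lim_within_Un)
  then show ?thesis by (simp add: u has_field_derivative_iff)
qed

lemma pw_deriv:
  fixes g h h' :: "real \<Rightarrow> real"
  assumes gneg: "\<And>r. r \<le> 0 \<Longrightarrow> g r = h r" and gpos: "\<And>r. r \<ge> 0 \<Longrightarrow> g r = 0"
    and hd: "\<And>r. (h has_real_derivative h' r) (at r)" and h0: "h' 0 = 0"
  shows "(g has_real_derivative (if r < 0 then h' r else 0)) (at r)"
proof (cases "r < 0")
  case True
  have "(g has_real_derivative h' r) (at r)"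
    by (rule has_field_derivative_transform_within_open[OF hd, of "{..<0}"])
       (use True gneg in auto)
  then show ?thesis using True by simp
next
  case False
  show ?thesis
  proof (cases "r > 0")
    case True
    have "((\<lambda>_. 0) has_real_derivative 0) (at r)" by simp
    then have "(g has_real_derivative 0) (at r)"
      by (rule has_field_derivative_transform_within_open[of _ _ _ "{0<..}"])
         (use True gpos in auto)
    then show ?thesis using True by simp
  next
    case False
    with \<open>\<not> r < 0\<close> have r0: "r = 0" by simp
    have a: "(g has_real_derivative 0) (at 0 within {..0})"
      by (rule has_field_derivative_transform_within[of h _ _ _ 1])
         (use gneg hd[of 0] h0 in \<open>auto intro: has_field_derivative_at_within\<close>)
    have b: "(g has_real_derivative 0) (at 0 within {0..})"
      by (rule has_field_derivative_transform_within[of "\<lambda>_. 0" _ _ _ 1])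
         (use gpos in auto)
    show ?thesis using deriv_split[OF a b] r0 by simp
  qed
qed

definition ncube :: "real \<Rightarrow> real" where "ncube r = - ((min r 0) ^ 3)"
definition ncube1 :: "real \<Rightarrow> real" where "ncube1 r = - 3 * ((min r 0) ^ 2)"
definition ncube2 :: "real \<Rightarrow> real" where "ncube2 r = - 6 * (min r 0)"

lemma ncube_deriv: "(ncube has_real_derivative ncube1 r) (at r)"
proof -
  have "(ncube has_real_derivative (if r < 0 then - 3 * r ^ 2 else 0)) (at r)"
    by (rule pw_deriv[where h="\<lambda>r. - (r ^ 3)"]) (auto simp: ncube_def intro!: derivative_eq_intros)
  then show ?thesis by (cases "r < 0") (auto simp: ncube1_def min_def)
qed

lemma ncube1_deriv: "(ncube1 has_real_derivative ncube2 r) (at r)"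
proof -
  have "(ncube1 has_real_derivative (if r < 0 then - 6 * r else 0)) (at r)"
    by (rule pw_deriv[where h="\<lambda>r. - 3 * r ^ 2"]) (auto simp: ncube1_def intro!: derivative_eq_intros)
  then show ?thesis by (cases "r < 0") (auto simp: ncube2_def min_def)
qed

lemma ncube2_cont: "continuous_on UNIV ncube2"
  unfolding ncube2_def by (intro continuous_intros)

lemma cont_slice:
  fixes w :: "real \<Rightarrow> real \<Rightarrow> real"
  assumes "continuous_on (A \<times> B) (\<lambda>(t,x). w t x)" "t \<in> A"
  shows "continuous_on B (w t)"
proof -
  have "continuous_on B ((\<lambda>(t,x). w t x) \<circ> (\<lambda>x. (t,x)))"
    by (rule continuous_on_compose) (use assms in \<open>auto intro!: continuous_intros elim: continuous_on_subset\<close>)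
  then show ?thesis by (simp add: o_def)
qed

lemma deriv_cont_on:
  fixes P Pd :: "real \<Rightarrow> real"
  assumes "\<forall>s\<in>S. (P has_real_derivative Pd s) (at s)"
  shows "continuous_on S P"
  using assms by (intro continuous_at_imp_continuous_on) (auto intro: DERIV_isCont)

lemma energy:
  fixes u ut ux J :: "real \<Rightarrow> real \<Rightarrow> real" and P Pd Pdd :: "real \<Rightarrow> real" and J0 ux0 :: "real \<Rightarrow> real"
  assumes L: "0 < L"
    and cu: "continuous_on ({0..T} \<times> {0..L}) (\<lambda>(t,x). u t x)"
    and cut: "continuous_on ({0..T} \<times> {0..L}) (\<lambda>(t,x). ut t x)"
    and dt: "\<forall>t\<in>{0..T}. \<forall>x\<in>{0..L}. ((\<lambda>s. u s x) has_real_derivative ut t x) (at t within {0..T})"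
    and S: "\<forall>t\<in>{0..T}. \<forall>x\<in>{0..L}. u t x \<in> S"
    and dP: "\<forall>s\<in>S. (P has_real_derivative Pd s) (at s)"
    and dP1: "\<forall>s\<in>S. (Pd has_real_derivative Pdd s) (at s)"
    and cP2: "continuous_on S Pdd"
    and t0: "t0 \<in> {0<..<T}"
    and dx: "\<forall>x\<in>{0..L}. (u t0 has_real_derivative ux0 x) (at x within {0..L})"
    and cux: "continuous_on {0..L} ux0"
    and cJ: "continuous_on {0..L} J0" and J0: "J0 0 = 0" "J0 L = 0"
    and dJ: "\<forall>x\<in>{0<..<L}. (J0 has_real_derivative ut t0 x) (at x)"
  shows "((\<lambda>t. integral {0..L} (\<lambda>x. P (u t x))) has_real_derivative
           integral {0..L} (\<lambda>x. - Pdd (u t0 x) * ux0 x * J0 x)) (at t0)"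
proof -
  have t0': "t0 \<in> {0..T}" using t0 by auto
  have cP: "continuous_on S P" by (rule deriv_cont_on[OF dP])
  have cP1: "continuous_on S Pd" by (rule deriv_cont_on[OF dP1])
  have im: "(\<lambda>(t,x). u t x) ` ({0..T} \<times> {0..L}) \<subseteq> S" using S by auto
  have cu2: "continuous_on ({0..T} \<times> {0..L}) (\<lambda>z. Pd ((\<lambda>(t,x). u t x) z))"
    by (rule continuous_on_compose2[OF cP1 cu im])
  have cfx: "continuous_on ({0..T} \<times> cbox 0 L) (\<lambda>(t,x). Pd (u t x) * ut t x)"
    using continuous_on_mult[OF cu2 cut] by (simp add: split_beta)
  have cuP: "continuous_on {0..L} (\<lambda>x. P (u t x))" if "t \<in> {0..T}" for t
    by (rule continuous_on_compose2[OF cP cont_slice[OF cu that]]) (use S that in auto)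
  have lb: "((\<lambda>t. integral (cbox 0 L) (\<lambda>x. P (u t x))) has_real_derivative
        integral (cbox 0 L) (\<lambda>x. Pd (u t0 x) * ut t0 x)) (at t0 within {0..T})"
  proof (rule leibniz_rule_field_derivative[where fx="\<lambda>t x. Pd (u t x) * ut t x"])
    fix t x assume "t \<in> {0..T}" "x \<in> cbox 0 L"
    then have a: "(P has_real_derivative Pd (u t x)) (at (u t x))"
      and b: "((\<lambda>s. u s x) has_real_derivative ut t x) (at t within {0..T})"
      using dP S dt by auto
    show "((\<lambda>t. P (u t x)) has_real_derivative Pd (u t x) * ut t x) (at t within {0..T})"
      using DERIV_chain2[OF a b] by simp
  next
    fix t assume "t \<in> {0..T}"
    then show "(\<lambda>x. P (u t x)) integrable_on cbox 0 L"
      using cuP[OF \<open>t \<in> {0..T}\<close>] by (simp add: integrable_continuous_real)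
  qed (use cfx t0' in auto)
  then have lb': "((\<lambda>t. integral {0..L} (\<lambda>x. P (u t x))) has_real_derivative
        integral {0..L} (\<lambda>x. Pd (u t0 x) * ut t0 x)) (at t0)"
    using at_within_Icc_interior[OF t0] by simp
  have cu0: "continuous_on {0..L} (u t0)" by (rule cont_slice[OF cu t0'])
  have cut0: "continuous_on {0..L} (ut t0)" by (rule cont_slice[OF cut t0'])
  have cP1u: "continuous_on {0..L} (\<lambda>x. Pd (u t0 x))"
    by (rule continuous_on_compose2[OF cP1 cu0]) (use S t0' in auto)
  have cP2u: "continuous_on {0..L} (\<lambda>x. Pdd (u t0 x))"
    by (rule continuous_on_compose2[OF cP2 cu0]) (use S t0' in auto)
  have ftc: "((\<lambda>x. Pdd (u t0 x) * ux0 x * J0 x + Pd (u t0 x) * ut t0 x) has_integral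
      ((\<lambda>x. Pd (u t0 x) * J0 x) L - (\<lambda>x. Pd (u t0 x) * J0 x) 0)) {0..L}"
  proof (rule fundamental_theorem_of_calculus_interior)
    show "0 \<le> L" using L by simp
    show "continuous_on {0..L} (\<lambda>x. Pd (u t0 x) * J0 x)"
      by (intro continuous_on_mult cP1u cJ)
    fix x assume x: "x \<in> {0<..<L}"
    have d1: "(u t0 has_real_derivative ux0 x) (at x)"
      using dx[rule_format, of x] x at_within_Icc_interior[OF x] by auto
    have d2: "((\<lambda>x. Pd (u t0 x)) has_real_derivative Pdd (u t0 x) * ux0 x) (at x)"
      using DERIV_chain2[OF _ d1, of Pd] dP1 S t0' x by auto
    have "((\<lambda>x. Pd (u t0 x) * J0 x) has_real_derivative
        Pdd (u t0 x) * ux0 x * J0 x + ut t0 x * Pd (u t0 x)) (at x)"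
      using DERIV_mult[OF d2 dJ[rule_format, OF x]] by simp
    then show "((\<lambda>x. Pd (u t0 x) * J0 x) has_vector_derivative
        Pdd (u t0 x) * ux0 x * J0 x + Pd (u t0 x) * ut t0 x) (at x)"
      by (simp add: has_real_derivative_iff_has_vector_derivative[symmetric] mult.commute)
  qed
  have i1: "(\<lambda>x. Pdd (u t0 x) * ux0 x * J0 x) integrable_on {0..L}"
    by (intro integrable_continuous_real continuous_on_mult cP2u cux cJ)
  have i2: "(\<lambda>x. Pd (u t0 x) * ut t0 x) integrable_on {0..L}"
    by (intro integrable_continuous_real continuous_on_mult cP1u cut0)
  have "integral {0..L} (\<lambda>x. Pdd (u t0 x) * ux0 x * J0 x) + integral {0..L} (\<lambda>x. Pd (u t0 x) * ut t0 x) = 0"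
    using ftc J0 integral_add[OF i1 i2] by (simp add: integral_unique)
  then have "integral {0..L} (\<lambda>x. Pd (u t0 x) * ut t0 x) = integral {0..L} (\<lambda>x. - Pdd (u t0 x) * ux0 x * J0 x)"
    by (simp add: integral_neg)
  then show ?thesis using lb' by simp
qed

lemma gronwall:
  fixes E E' :: "real \<Rightarrow> real"
  assumes cE: "continuous_on {0..T} E"
    and dE: "\<forall>t\<in>{0<..<T}. (E has_real_derivative E' t) (at t)"
    and le: "\<forall>t\<in>{0<..<T}. E' t \<le> a * (E t + m)"
    and t: "t \<in> {0..T}"
  shows "E t + m \<le> (E 0 + m) * exp (a * t)"
proof -
  define G where "G s = (E s + m) * exp (- a * s)" for s
  have "G t \<le> G 0"
  proof (rule DERIV_nonpos_imp_decreasing_open[of 0 _ G])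
    show "0 \<le> t" using t by simp
    fix x assume x: "0 < x" "x < t"
    then have xT: "x \<in> {0<..<T}" using t by auto
    have "(G has_real_derivative E' x * exp (- a * x) + (E x + m) * (exp (- a * x) * (- a))) (at x)"
      unfolding G_def using dE xT by (auto intro!: derivative_eq_intros)
    moreover have "E' x * exp (- a * x) + (E x + m) * (exp (- a * x) * (- a)) =
        exp (- a * x) * (E' x - a * (E x + m))" by (simp add: algebra_simps)
    moreover have "exp (- a * x) * (E' x - a * (E x + m)) \<le> 0"
      using le xT by (intro mult_nonneg_nonpos) auto
    ultimately show "\<exists>y. (G has_real_derivative y) (at x) \<and> y \<le> 0" by auto
  next
    show "continuous_on {0..t} G"
      unfolding G_def using t by (intro continuous_intros continuous_on_subset[OF cE]) auto
  qed
  then have "(E t + m) * exp (- a * t) \<le> E 0 + m" by (simp add: G_def)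
  then have "(E t + m) * exp (- a * t) * exp (a * t) \<le> (E 0 + m) * exp (a * t)"
    by (intro mult_right_mono) auto
  then show ?thesis by (simp add: mult.assoc exp_add[symmetric])
qed

lemma dissip:
  fixes E E' D :: "real \<Rightarrow> real"
  assumes cE: "continuous_on {0..T} E"
    and dE: "\<forall>t\<in>{0<..<T}. (E has_real_derivative E' t) (at t)"
    and cD: "continuous_on {0..T} D"
    and le: "\<forall>t\<in>{0<..<T}. E' t + c * D t \<le> B"
    and T: "0 \<le> T"
  shows "E T + c * integral {0..T} D \<le> E 0 + B * T"
proof -
  define H where "H s = E s + c * integral {0..s} D - B * s" for s
  have "H T \<le> H 0"
  proof (rule DERIV_nonpos_imp_decreasing_open[of 0 _ H])
    show "0 \<le> T" by fact
    fix x assume x: "0 < x" "x < T"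
    then have xT: "x \<in> {0<..<T}" by auto
    have dI: "((\<lambda>s. integral {0..s} D) has_real_derivative D x) (at x)"
      using integral_has_real_derivative[OF cD, of x] x at_within_Icc_interior[OF xT] by auto
    have "(H has_real_derivative E' x + c * D x - B) (at x)"
      unfolding H_def using dE xT dI by (auto intro!: derivative_eq_intros)
    then show "\<exists>y. (H has_real_derivative y) (at x) \<and> y \<le> 0" using le xT by force
  next
    have "continuous_on {0..T} (\<lambda>s. integral {0..s} D)"
      by (rule indefinite_integral_continuous_1) (rule integrable_continuous_real[OF cD])
    then show "continuous_on {0..T} H"
      unfolding H_def by (intro continuous_intros cE)
  qed
  then show ?thesis by (simp add: H_def)
qed

lemma reg_facts:
  assumes reg: "classical_reg L T u"
  shows "continuous_on ({0..T} \<times> {0..L}) (\<lambda>(t,x). u t x)"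
    and "continuous_on ({0..T} \<times> {0..L}) (\<lambda>(t,x). Dx L u t x)"
    and "continuous_on ({0..T} \<times> {0..L}) (\<lambda>(t,x). Dt T u t x)"
    and "\<forall>t\<in>{0..T}. \<forall>x\<in>{0..L}. (u t has_real_derivative Dx L u t x) (at x within {0..L})"
    and "\<forall>t\<in>{0..T}. \<forall>x\<in>{0..L}. ((\<lambda>s. u s x) has_real_derivative Dt T u t x) (at t within {0..T})"
proof -
  have c: "\<forall>k\<le>3. continuous_on ({0..T} \<times> {0..L}) (\<lambda>(t,x). (Dx L ^^ k) u t x)"
    using reg unfolding classical_reg_def by blast
  show "continuous_on ({0..T} \<times> {0..L}) (\<lambda>(t,x). u t x)" using c[rule_format, of 0] by simp
  show "continuous_on ({0..T} \<times> {0..L}) (\<lambda>(t,x). Dx L u t x)" using c[rule_format, of 1] by simp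
  show "continuous_on ({0..T} \<times> {0..L}) (\<lambda>(t,x). Dt T u t x)" using reg unfolding classical_reg_def by blast
  show "\<forall>t\<in>{0..T}. \<forall>x\<in>{0..L}. (u t has_real_derivative Dx L u t x) (at x within {0..L})"
  proof (intro ballI)
    fix t x assume "t \<in> {0..T}" "x \<in> {0..L}"
    then have "(u t) differentiable (at x within {0..L})"
      using reg unfolding classical_reg_def by (metis funpow_0 zero_less_numeral)
    then show "(u t has_real_derivative Dx L u t x) (at x within {0..L})"
      unfolding has_real_derivative_iff_has_vector_derivative Dx_def
      by (simp add: vector_derivative_works)
  qed
  show "\<forall>t\<in>{0..T}. \<forall>x\<in>{0..L}. ((\<lambda>s. u s x) has_real_derivative Dt T u t x) (at t within {0..T})"
  proof (intro ballI)
    fix t x assume "t \<in> {0..T}" "x \<in> {0..L}"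
    then have "(\<lambda>s. u s x) differentiable (at t within {0..T})"
      using reg unfolding classical_reg_def by blast
    then show "((\<lambda>s. u s x) has_real_derivative Dt T u t x) (at t within {0..T})"
      unfolding has_real_derivative_iff_has_vector_derivative Dt_def
      by (simp add: vector_derivative_works)
  qed
qed

lemma V_facts:
  assumes "C31_on L V"
  shows "\<forall>x\<in>{0..L}. (V has_real_derivative dX L V x) (at x within {0..L})"
    and "continuous_on {0..L} (dX L V)"
proof -
  have d: "\<forall>k<3. \<forall>x\<in>{0..L}. ((dX L ^^ k) V) differentiable (at x within {0..L})"
    using assms unfolding C31_on_def C_on_def by blast
  show "\<forall>x\<in>{0..L}. (V has_real_derivative dX L V x) (at x within {0..L})"
  proof
    fix x assume "x \<in> {0..L}"
    then have "V differentiable (at x within {0..L})" using d[rule_format, of 0] by simp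
    then show "(V has_real_derivative dX L V x) (at x within {0..L})"
      unfolding has_real_derivative_iff_has_vector_derivative dX_def
      by (simp add: vector_derivative_works)
  qed
  have "\<forall>x\<in>{0..L}. (dX L V) differentiable (at x within {0..L})" using d[rule_format, of 1] by simp
  then show "continuous_on {0..L} (dX L V)"
    by (auto simp: continuous_on_eq_continuous_within intro: differentiable_imp_continuous_within)
qed

lemma f_facts:
  assumes "C4beta_loc f \<beta>"
  shows "\<forall>s>0. (deriv f has_real_derivative (deriv ^^ 2) f s) (at s)"
    and "continuous_on {0<..} ((deriv ^^ 2) f)"
proof -
  have d: "\<forall>k<4. \<forall>s>0. ((deriv ^^ k) f) differentiable (at s)"
    using assms unfolding C4beta_loc_def by blast
  show "\<forall>s>0. (deriv f has_real_derivative (deriv ^^ 2) f s) (at s)"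
  proof (intro allI impI)
    fix s :: real assume "s > 0"
    then have "deriv f differentiable (at s)" using d[rule_format, of 1 s] by simp
    then show "(deriv f has_real_derivative (deriv ^^ 2) f s) (at s)"
      by (simp add: DERIV_deriv_iff_real_differentiable numeral_2_eq_2)
  qed
  have "\<forall>s>0. ((deriv ^^ 2) f) differentiable (at s)" using d[rule_format, of 2] by simp
  then show "continuous_on {0<..} ((deriv ^^ 2) f)"
    by (intro continuous_at_imp_continuous_on) (auto intro: differentiable_imp_continuous_within)
qed

definition bfun :: "(real \<Rightarrow> real) \<Rightarrow> (real \<Rightarrow> real) \<Rightarrow> real \<Rightarrow> (real \<Rightarrow> real \<Rightarrow> real)
    \<Rightarrow> (real \<Rightarrow> real \<Rightarrow> real) \<Rightarrow> real \<Rightarrow> real \<Rightarrow> real" where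
  "bfun f V L r1 r2 t x = (deriv ^^ 2) f (r1 t x + r2 t x) * (Dx L r1 t x + Dx L r2 t x) + dX L V x"

lemma pressure_facts:
  assumes L: "0 < L" and f: "C4beta_loc f \<beta>" and V: "C31_on L V"
    and reg1: "classical_reg L T r1" and reg2: "classical_reg L T r2"
    and pos: "\<forall>t\<in>{0..T}. \<forall>x\<in>{0..L}. r1 t x + r2 t x > 0"
  shows "\<forall>t\<in>{0..T}. \<forall>x\<in>{0..L}. Dx L (pressure f V r1 r2) t x = bfun f V L r1 r2 t x"
    and "continuous_on ({0..T} \<times> {0..L}) (\<lambda>(t,x). bfun f V L r1 r2 t x)"
proof -
  note R1 = reg_facts[OF reg1] and R2 = reg_facts[OF reg2] and VF = V_facts[OF V] and FF = f_facts[OF f]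
  show "\<forall>t\<in>{0..T}. \<forall>x\<in>{0..L}. Dx L (pressure f V r1 r2) t x = bfun f V L r1 r2 t x"
  proof (intro ballI)
    fix t x assume t: "t \<in> {0..T}" and x: "x \<in> {0..L}"
    have ds: "((\<lambda>y. r1 t y + r2 t y) has_real_derivative Dx L r1 t x + Dx L r2 t x) (at x within {0..L})"
      using R1(4) R2(4) t x by (auto intro!: derivative_eq_intros)
    have df: "(deriv f has_real_derivative (deriv ^^ 2) f (r1 t x + r2 t x)) (at (r1 t x + r2 t x))"
      using FF(1) pos t x by auto
    have "(pressure f V r1 r2 t has_real_derivative bfun f V L r1 r2 t x) (at x within {0..L})"
      unfolding pressure_def bfun_def
      using DERIV_add[OF DERIV_chain2[OF df ds] VF(1)[rule_format, OF x]] by simp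
    then show "Dx L (pressure f V r1 r2) t x = bfun f V L r1 r2 t x"
      unfolding Dx_def using L x
      by (intro vector_derivative_within_closed_interval) (auto simp: has_real_derivative_iff_has_vector_derivative)
  qed
  have im: "(\<lambda>(t,x). r1 t x + r2 t x) ` ({0..T} \<times> {0..L}) \<subseteq> {0<..}" using pos by auto
  have c1: "continuous_on ({0..T} \<times> {0..L}) (\<lambda>z. (deriv ^^ 2) f ((\<lambda>(t,x). r1 t x + r2 t x) z))"
    by (rule continuous_on_compose2[OF FF(2) _ im])
       (use continuous_on_add[OF R1(1) R2(1)] in \<open>simp add: split_beta\<close>)
  have c2: "continuous_on ({0..T} \<times> {0..L}) (\<lambda>z. dX L V (snd z))"
    by (rule continuous_on_compose2[OF VF(2)]) (auto intro: continuous_intros)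
  show "continuous_on ({0..T} \<times> {0..L}) (\<lambda>(t,x). bfun f V L r1 r2 t x)"
    unfolding bfun_def using continuous_on_add[OF continuous_on_mult[OF c1 continuous_on_add[OF R1(2) R2(2)]] c2]
    by (simp add: split_beta)
qed

lemma flux_eq:
  assumes "\<forall>t\<in>{0..T}. \<forall>x\<in>{0..L}. Dx L (pressure f V r1 r2) t x = bfun f V L r1 r2 t x"
    and "t \<in> {0..T}" "x \<in> {0..L}"
  shows "flux L f \<eta> V ri r1 r2 t x = \<eta> * Dx L ri t x + ri t x * bfun f V L r1 r2 t x"
  using assms unfolding flux_def by simp

lemma flux_deriv:
  assumes "component_eq L T f \<eta> V ri r1 r2" "t \<in> {0<..<T}" "x \<in> {0<..<L}"
  shows "(flux L f \<eta> V ri r1 r2 t has_real_derivative Dt T ri t x) (at x)"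
proof -
  have "(flux L f \<eta> V ri r1 r2 t) differentiable (at x within {0..L})"
    and e: "Dt T ri t x = Dx L (flux L f \<eta> V ri r1 r2) t x"
    using assms unfolding component_eq_def by auto
  then have "(flux L f \<eta> V ri r1 r2 t has_real_derivative Dt T ri t x) (at x within {0..L})"
    unfolding has_real_derivative_iff_has_vector_derivative e Dx_def
    by (simp add: vector_derivative_works)
  then show ?thesis using at_within_Icc_interior[OF assms(3)] by simp
qed

lemma flux_bdry:
  assumes "component_eq L T f \<eta> V ri r1 r2" "t \<in> {0<..<T}"
  shows "flux L f \<eta> V ri r1 r2 t 0 = 0" "flux L f \<eta> V ri r1 r2 t L = 0"
  using assms unfolding component_eq_def by auto

lemma young1:
  fixes e q Y B :: real
  assumes "e > 0"
  shows "- e * Y^2 + q * Y * B \<le> q^2 * B^2 / (4 * e)"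
proof -
  have "0 \<le> (2 * e * Y - q * B)^2" by simp
  also have "(2 * e * Y - q * B)^2 = q^2 * B^2 - (- e * Y^2 + q * Y * B) * (4 * e)"
    by (simp add: power2_eq_square algebra_simps)
  finally have "(- e * Y^2 + q * Y * B) * (4 * e) \<le> q^2 * B^2" by simp
  then show ?thesis using assms by (subst pos_le_divide_eq) auto
qed

lemma ncube_ineq:
  fixes \<eta> r y b B :: real
  assumes e: "\<eta> > 0" and b: "\<bar>b\<bar> \<le> B"
  shows "- ncube2 r * y * (\<eta> * y + r * b) \<le> (3 * B^2 / (2 * \<eta>)) * ncube r"
proof (cases "r \<ge> 0")
  case True
  then show ?thesis by (simp add: ncube_def ncube2_def)
next
  case False
  define q where "q = - r"
  have q: "q > 0" using False q_def by simp
  have r: "r = - q" using q_def by simp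
  have "y * b \<le> \<bar>y\<bar> * B" using mult_left_mono[OF b abs_ge_zero[of y]] abs_ge_self[of "y*b"] by (simp add: abs_mult)
  then have "q * y * b \<le> q * \<bar>y\<bar> * B" using q by (simp add: mult.assoc)
  moreover have "- \<eta> * y^2 + q * \<bar>y\<bar> * B \<le> q^2 * B^2 / (4 * \<eta>)"
    using young1[OF e, of "\<bar>y\<bar>" q B] by simp
  ultimately have k: "- \<eta> * y^2 + q * y * b \<le> q^2 * B^2 / (4 * \<eta>)" by linarith
  have n2: "ncube2 (- q) = 6 * q" using False r by (simp add: ncube2_def min_def)
  have n: "ncube (- q) = q^3" using False r by (simp add: ncube_def min_def)
  have "- ncube2 r * y * (\<eta> * y + r * b) = 6 * q * (- \<eta> * y^2 + q * y * b)"
    unfolding r n2 by (simp add: power2_eq_square algebra_simps)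
  also have "\<dots> \<le> 6 * q * (q^2 * B^2 / (4 * \<eta>))"
    using k q by (intro mult_left_mono) auto
  also have "\<dots> = (3 * B^2 / (2 * \<eta>)) * ncube r"
    unfolding r n using e by (simp add: power2_eq_square power3_eq_cube)
  finally show ?thesis .
qed

lemma nonneg_sol:
  assumes L: "0 < L" and T: "0 < T" and f: "C4beta_loc f \<beta>" and V: "C31_on L V" and e: "\<eta> > 0"
    and reg1: "classical_reg L T r1" and reg2: "classical_reg L T r2"
    and pos: "\<forall>t\<in>{0..T}. \<forall>x\<in>{0..L}. r1 t x + r2 t x > 0"
    and regi: "classical_reg L T ri" and comp: "component_eq L T f \<eta> V ri r1 r2"
    and init: "\<forall>x\<in>{0..L}. ri 0 x \<ge> 0"
  shows "\<forall>t\<in>{0..T}. \<forall>x\<in>{0..L}. ri t x \<ge> 0"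
proof -
  note PF = pressure_facts[OF L f V reg1 reg2 pos] and R = reg_facts[OF regi]
  obtain B where B0: "B \<ge> 0" and Bb: "\<And>z. z \<in> {0..T} \<times> {0..L} \<Longrightarrow> norm ((\<lambda>(t,x). bfun f V L r1 r2 t x) z) \<le> B"
    using continuous_on_compact_bound[OF compact_Times[OF compact_Icc compact_Icc] PF(2)] by blast
  have bB: "\<bar>bfun f V L r1 r2 t x\<bar> \<le> B" if "t \<in> {0..T}" "x \<in> {0..L}" for t x
    using Bb[of "(t,x)"] that by auto
  define a where "a = 3 * B^2 / (2 * \<eta>)"
  define E where "E t = integral {0..L} (\<lambda>x. ncube (ri t x))" for t
  have cn: "continuous_on UNIV ncube" using ncube_deriv by (intro deriv_cont_on) auto
  have cn1: "continuous_on UNIV ncube2" by (rule ncube2_cont)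
  have cjoint: "continuous_on ({0..T} \<times> cbox 0 L) (\<lambda>(t,x). ncube (ri t x))"
    using continuous_on_compose2[OF cn R(1)] by (simp add: split_beta)
  have cE: "continuous_on {0..T} E"
    unfolding E_def using integral_continuous_on_param[OF cjoint] by simp
  have cflux: "continuous_on {0..L} (flux L f \<eta> V ri r1 r2 t)" if t: "t \<in> {0..T}" for t
  proof -
    have "continuous_on {0..L} (\<lambda>x. \<eta> * Dx L ri t x + ri t x * bfun f V L r1 r2 t x)"
      using cont_slice[OF R(2) t] cont_slice[OF R(1) t] cont_slice[OF PF(2) t]
      by (intro continuous_intros) auto
    then show ?thesis
      by (rule continuous_on_eq) (use flux_eq[OF PF(1) t] in auto)
  qed
  have dE: "\<forall>t\<in>{0<..<T}. (E has_real_derivative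
      integral {0..L} (\<lambda>x. - ncube2 (ri t x) * Dx L ri t x * flux L f \<eta> V ri r1 r2 t x)) (at t)"
  proof
    fix t assume t: "t \<in> {0<..<T}"
    then have t': "t \<in> {0..T}" by auto
    show "(E has_real_derivative
      integral {0..L} (\<lambda>x. - ncube2 (ri t x) * Dx L ri t x * flux L f \<eta> V ri r1 r2 t x)) (at t)"
      unfolding E_def
    proof (rule energy[where S=UNIV and Pd=ncube1 and ut="Dt T ri"])
      show "\<forall>x\<in>{0<..<L}. (flux L f \<eta> V ri r1 r2 t has_real_derivative Dt T ri t x) (at x)"
        using flux_deriv[OF comp t] by auto
    qed (use L R t cflux[OF t'] flux_bdry[OF comp t] cont_slice[OF R(2) t'] ncube_deriv ncube1_deriv cn1 in auto)
  qed
  have le: "\<forall>t\<in>{0<..<T}. integral {0..L} (\<lambda>x. - ncube2 (ri t x) * Dx L ri t x * flux L f \<eta> V ri r1 r2 t x)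
      \<le> a * (E t + 0)"
  proof
    fix t assume t: "t \<in> {0<..<T}"
    then have t': "t \<in> {0..T}" by auto
    have i1: "(\<lambda>x. - ncube2 (ri t x) * Dx L ri t x * flux L f \<eta> V ri r1 r2 t x) integrable_on {0..L}"
    proof (intro integrable_continuous_real continuous_intros cflux[OF t'] cont_slice[OF R(2) t'])
      show "continuous_on {0..L} (\<lambda>x. ncube2 (ri t x))"
        using continuous_on_compose2[OF cn1 cont_slice[OF R(1) t']] by simp
    qed
    have i2: "(\<lambda>x. a * ncube (ri t x)) integrable_on {0..L}"
      using continuous_on_compose2[OF cn cont_slice[OF R(1) t']]
      by (intro integrable_continuous_real continuous_intros) simp
    have "integral {0..L} (\<lambda>x. - ncube2 (ri t x) * Dx L ri t x * flux L f \<eta> V ri r1 r2 t x)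
        \<le> integral {0..L} (\<lambda>x. a * ncube (ri t x))"
    proof (rule integral_le[OF i1 i2])
      fix x assume x: "x \<in> {0..L}"
      show "- ncube2 (ri t x) * Dx L ri t x * flux L f \<eta> V ri r1 r2 t x \<le> a * ncube (ri t x)"
        unfolding flux_eq[OF PF(1) t' x] a_def by (rule ncube_ineq[OF e bB[OF t' x]])
    qed
    then show "integral {0..L} (\<lambda>x. - ncube2 (ri t x) * Dx L ri t x * flux L f \<eta> V ri r1 r2 t x)
      \<le> a * (E t + 0)" by (simp add: E_def)
  qed
  have E0: "E 0 = 0"
  proof -
    have "E 0 = integral {0..L} (\<lambda>x. 0)"
      unfolding E_def by (rule integral_cong) (use init in \<open>force simp: ncube_def min_def\<close>)
    then show ?thesis by simp
  qed
  show ?thesis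
  proof (intro ballI)
    fix t x assume t: "t \<in> {0..T}" and x: "x \<in> {0..L}"
    have "E t + 0 \<le> (E 0 + 0) * exp (a * t)" by (rule gronwall[OF cE dE le t])
    then have Et: "E t \<le> 0" using E0 by simp
    have cs: "continuous_on {0..L} (\<lambda>x. ncube (ri t x))"
      using continuous_on_compose2[OF cn cont_slice[OF R(1) t]] by simp
    have nn: "\<And>r. ncube r \<ge> 0"
      by (simp add: ncube_def min_def) 
    have "E t \<ge> 0" unfolding E_def
      by (rule integral_nonneg) (use cs nn in \<open>auto intro: integrable_continuous_real\<close>)
    with Et have "E t = 0" by simp
    then have "((\<lambda>x. ncube (ri t x)) has_integral 0) (cbox 0 L)"
      using integrable_integral[OF integrable_continuous_real[OF cs]] by (simp add: E_def)
    then have "ncube (ri t x) = 0"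
      by (rule has_integral_0_cbox_imp_0[rotated 2]) (use cs nn x L in auto)
    then show "ri t x \<ge> 0" by (auto simp: ncube_def min_def split: if_splits)
  qed
qed

lemma powr_le_sum:
  fixes s a \<theta> :: real
  assumes s: "s > 0" and a1: "a \<le> 0" and a2: "- \<theta> \<le> a"
  shows "s powr a \<le> s powr (- \<theta>) + 1"
proof (cases "s \<ge> 1")
  case True
  then have "s powr a \<le> s powr 0" using a1 by (intro powr_mono) auto
  moreover have "s powr 0 = 1" using s by simp
  moreover have "0 \<le> s powr (- \<theta>)" by simp
  ultimately show ?thesis by linarith
next
  case False
  then have "s powr a \<le> s powr (- \<theta>)" using a2 s by (intro powr_mono') auto
  then show ?thesis by simp
qed

lemma young2:
  fixes F Y l :: real
  assumes F: "F > 0"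
  shows "l * Y \<le> F * Y^2 / 2 + l^2 / (2 * F)"
proof -
  have "0 \<le> (F * Y - l)^2" by simp
  also have "(F * Y - l)^2 = (F * Y^2 / 2 + l^2 / (2 * F) - l * Y) * (2 * F)"
    using F by (simp add: power2_eq_square field_simps)
  finally show ?thesis using F by (simp add: zero_le_mult_iff)
qed

lemma I2_lower:
  fixes s \<alpha> \<kappa> F :: real
  assumes s: "s > 0" and aK: "\<alpha> * \<kappa> > 0"
  and F: "1 / (\<alpha> * \<kappa>) * s powr \<alpha> \<le> s\<^sup>2 * F"
  shows Fs: "F \<ge> s powr (\<alpha> - 2) / (\<alpha> * \<kappa>)" and "F > 0"
proof -
  have s2: "s\<^sup>2 > 0" using s by simp
  have e: "s powr (\<alpha> - 2) / (\<alpha> * \<kappa>) = (1 / (\<alpha> * \<kappa>) * s powr \<alpha>) / s\<^sup>2"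
    using s by (simp add: powr_diff powr_realpow)
  have "(1 / (\<alpha> * \<kappa>) * s powr \<alpha>) / s\<^sup>2 \<le> F"
    using F s2 by (simp only: pos_divide_le_eq mult.commute)
  then show "F \<ge> s powr (\<alpha> - 2) / (\<alpha> * \<kappa>)" using e by simp
  moreover have "0 < s powr (\<alpha> - 2) / (\<alpha> * \<kappa>)" using s aK by simp
  ultimately show "F > 0" by linarith
qed

lemma main_pt:
  fixes s y \<eta> F w l \<alpha> \<kappa> \<theta> :: real
  assumes s: "s > 0" and e: "\<eta> \<ge> 0" and th: "\<theta> > 0" and al: "\<alpha> > 0" "\<alpha> \<le> 1" and ka: "\<kappa> > 0"
    and th2: "1 - \<alpha> < \<theta>"
    and F: "1 / (\<alpha> * \<kappa>) * s powr \<alpha> \<le> s\<^sup>2 * F"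
    and w: "\<bar>w\<bar> \<le> l * s" and l: "l \<ge> 0"
  shows "- (\<theta> * (\<theta> + 1) * s powr (- \<theta> - 2)) * y * (\<eta> * y + s * F * y + w)
    \<le> - (\<theta> * (\<theta> + 1) / (2 * \<alpha> * \<kappa> * ((\<alpha> - 1 - \<theta>) / 2)^2))
          * (((\<alpha> - 1 - \<theta>) / 2) * s powr ((\<alpha> - 1 - \<theta>) / 2 - 1) * y)^2
      + (\<theta> * (\<theta> + 1) * l^2 * \<alpha> * \<kappa> / 2) * (s powr (- \<theta>) + 1)"
proof -
  define k where "k = \<theta> * (\<theta> + 1)"
  define p where "p = (\<alpha> - 1 - \<theta>) / 2"
  define Q where "Q = s powr (- \<theta> - 2)"
  define R where "R = s powr (- \<theta> - 1)"
  have k: "k > 0" using th by (simp add: k_def)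
  have Q: "Q > 0" using s by (simp add: Q_def)
  have R: "R > 0" using s by (simp add: R_def)
  have QR: "Q * s = R"
  proof -
    have "s powr (- \<theta> - 2 + 1) = s powr (- \<theta> - 2) * s powr 1" by (rule powr_add)
    moreover have "- \<theta> - 2 + 1 = - \<theta> - 1" by simp
    moreover have "s powr 1 = s" using s by simp
    ultimately show ?thesis by (simp add: Q_def R_def)
  qed
  have p: "p \<noteq> 0" using th al by (simp add: p_def)
  have aK: "\<alpha> * \<kappa> > 0" using al ka by simp
  have Fs: "F \<ge> s powr (\<alpha> - 2) / (\<alpha> * \<kappa>)" and Fpos: "F > 0"
    using I2_lower[OF s aK F] by auto
  have yw: "- (y * w) \<le> \<bar>y\<bar> * (l * s)"
    using mult_left_mono[OF w abs_ge_zero[of y]] abs_ge_self[of "- (y*w)"] by (simp add: abs_mult)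
  have "- (k * Q) * y * (\<eta> * y + s * F * y + w)
      = - (k * Q) * (\<eta> * y^2) - k * (Q * s) * F * y^2 + k * Q * (- (y * w))"
    by (simp add: power2_eq_square algebra_simps)
  also have "\<dots> \<le> - k * R * F * y^2 + k * Q * (\<bar>y\<bar> * (l * s))"
    using k Q e yw unfolding QR
    by (intro add_mono diff_mono mult_left_mono) (auto intro!: mult_nonneg_nonneg)
  also have "\<dots> = - k * R * F * y^2 + k * R * (l * \<bar>y\<bar>)"
    by (simp add: QR[symmetric] algebra_simps)
  also have "\<dots> \<le> - k * R * F * y^2 + k * R * (F * \<bar>y\<bar>^2 / 2 + l^2 / (2 * F))"
    using young2[OF Fpos, of l "\<bar>y\<bar>"] k R by (intro add_left_mono mult_left_mono) auto
  also have "\<dots> = - (k / 2) * (R * F * y^2) + (k / 2) * l^2 * (R / F)"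
    by (simp add: algebra_simps)
  finally have step1: "- (k * Q) * y * (\<eta> * y + s * F * y + w)
      \<le> - (k / 2) * (R * F * y^2) + (k / 2) * l^2 * (R / F)" .
  have "R * F * y^2 \<ge> R * (s powr (\<alpha> - 2) / (\<alpha> * \<kappa>)) * y^2"
    using Fs R by (intro mult_right_mono mult_left_mono) auto
  moreover have "R * (s powr (\<alpha> - 2) / (\<alpha> * \<kappa>)) * y^2 = (p * s powr (p - 1) * y)^2 / (p^2 * (\<alpha> * \<kappa>))"
  proof -
    have pe: "2 * (p - 1) = (- \<theta> - 1) + (\<alpha> - 2)" by (simp add: p_def field_simps)
    have X: "R * s powr (\<alpha> - 2) = (s powr (p - 1))^2"
    proof -
      have "(s powr (p - 1)) powr (real 2) = (s powr (p - 1))^2" by (rule powr_realpow) (use s in simp)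
      then have "(s powr (p - 1))^2 = s powr (2 * (p - 1))" by (simp add: powr_powr mult.commute)
      also have "\<dots> = R * s powr (\<alpha> - 2)" unfolding pe R_def by (rule powr_add)
      finally show ?thesis by simp
    qed
    have "(p * s powr (p - 1) * y)^2 / (p^2 * (\<alpha> * \<kappa>)) = (p^2 * (s powr (p - 1))^2 * y^2) / (p^2 * (\<alpha> * \<kappa>))"
      by (simp add: power_mult_distrib)
    also have "\<dots> = (s powr (p - 1))^2 * y^2 / (\<alpha> * \<kappa>)"
      using p by simp
    also have "\<dots> = R * (s powr (\<alpha> - 2) / (\<alpha> * \<kappa>)) * y^2"
      unfolding X[symmetric] by simp
    finally show ?thesis by simp
  qed
  ultimately have diss: "R * F * y^2 \<ge> (p * s powr (p - 1) * y)^2 / (p^2 * (\<alpha> * \<kappa>))" by simp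
  have "R / F \<le> R * (\<alpha> * \<kappa> * s powr (2 - \<alpha>))"
  proof -
    have "1 / F \<le> 1 / (s powr (\<alpha> - 2) / (\<alpha> * \<kappa>))"
      using Fs s aK Fpos by (intro divide_left_mono) auto
    also have "\<dots> = \<alpha> * \<kappa> * s powr (2 - \<alpha>)"
      using s by (simp add: powr_diff powr_minus_divide)
    finally show ?thesis using R by (simp add: divide_inverse mult_left_mono)
  qed
  also have "\<dots> = \<alpha> * \<kappa> * s powr (1 - \<alpha> - \<theta>)"
    using s by (simp add: R_def powr_add[symmetric] algebra_simps)
  also have "\<dots> \<le> \<alpha> * \<kappa> * (s powr (- \<theta>) + 1)"
    using aK s al th2 by (intro mult_left_mono powr_le_sum) auto
  finally have src: "R / F \<le> \<alpha> * \<kappa> * (s powr (- \<theta>) + 1)" .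
  have "- (k / 2) * (R * F * y^2) + (k / 2) * l^2 * (R / F)
     \<le> - (k / 2) * ((p * s powr (p - 1) * y)^2 / (p^2 * (\<alpha> * \<kappa>))) + (k / 2) * l^2 * (\<alpha> * \<kappa> * (s powr (- \<theta>) + 1))"
  proof -
    have a: "(k / 2) * ((p * s powr (p - 1) * y)^2 / (p^2 * (\<alpha> * \<kappa>))) \<le> (k / 2) * (R * F * y^2)"
      by (rule mult_left_mono[OF diss]) (use k in simp)
    have b: "(k / 2) * l^2 * (R / F) \<le> (k / 2) * l^2 * (\<alpha> * \<kappa> * (s powr (- \<theta>) + 1))"
      by (rule mult_left_mono[OF src]) (use k in simp)
    show ?thesis using a b by linarith
  qed
  also have "\<dots> = - (k / (2 * \<alpha> * \<kappa> * p^2)) * (p * s powr (p - 1) * y)^2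
      + (k * l^2 * \<alpha> * \<kappa> / 2) * (s powr (- \<theta>) + 1)"
    using p aK by (simp add: field_simps)
  finally show ?thesis using step1 unfolding k_def p_def Q_def by linarith
qed


lemma flux_cont:
  assumes PF1: "\<forall>t\<in>{0..T}. \<forall>x\<in>{0..L}. Dx L (pressure f V r1 r2) t x = bfun f V L r1 r2 t x"
    and PF2: "continuous_on ({0..T} \<times> {0..L}) (\<lambda>(t,x). bfun f V L r1 r2 t x)"
    and regi: "classical_reg L T ri" and t: "t \<in> {0..T}"
  shows "continuous_on {0..L} (flux L f \<eta> V ri r1 r2 t)"
proof -
  note R = reg_facts[OF regi]
  have "continuous_on {0..L} (\<lambda>x. \<eta> * Dx L ri t x + ri t x * bfun f V L r1 r2 t x)"
    using cont_slice[OF R(2) t] cont_slice[OF R(1) t] cont_slice[OF PF2 t]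
    by (intro continuous_intros) auto
  then show ?thesis
    by (rule continuous_on_eq) (use flux_eq[OF PF1 t] in auto)
qed

lemma Dx_pow:
  assumes L: "0 < L" and reg1: "classical_reg L T r1" and reg2: "classical_reg L T r2"
    and pos: "\<forall>t\<in>{0..T}. \<forall>x\<in>{0..L}. r1 t x + r2 t x > 0"
    and t: "t \<in> {0..T}" and x: "x \<in> {0..L}"
  shows "Dx L (\<lambda>s y. (r1 s y + r2 s y) powr p) t x
     = p * (r1 t x + r2 t x) powr (p - 1) * (Dx L r1 t x + Dx L r2 t x)"
proof -
  note R1 = reg_facts[OF reg1] and R2 = reg_facts[OF reg2]
  have ds: "((\<lambda>y. r1 t y + r2 t y) has_real_derivative Dx L r1 t x + Dx L r2 t x) (at x within {0..L})"
    using R1(4) R2(4) t x by (auto intro!: derivative_eq_intros)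
  have dp: "((\<lambda>z. z powr p) has_real_derivative p * (r1 t x + r2 t x) powr (p - 1)) (at (r1 t x + r2 t x))"
    using pos t x by (intro has_real_derivative_powr) auto
  have "((\<lambda>y. (r1 t y + r2 t y) powr p) has_real_derivative
        p * (r1 t x + r2 t x) powr (p - 1) * (Dx L r1 t x + Dx L r2 t x)) (at x within {0..L})"
    using DERIV_chain2[OF dp ds] by simp
  then show ?thesis
    unfolding Dx_def using L x
    by (intro vector_derivative_within_closed_interval) (auto simp: has_real_derivative_iff_has_vector_derivative)
qed

lemma int_cm:
  fixes f :: "real \<Rightarrow> real"
  assumes "f integrable_on S"
  shows "(\<lambda>x. c * f x) integrable_on S"
  using integrable_cmul[OF assms, of c] by simp

lemma main_est:
  fixes \<alpha> \<kappa> \<theta> L T N l1 l2 \<eta> :: real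
  assumes L: "0 < L" and T: "0 < T" and th2: "1 - \<alpha> < \<theta>"
    and al: "0 < \<alpha>" "\<alpha> \<le> 1" and ka: "0 < \<kappa>"
    and I2: "I2 \<alpha> \<kappa> f" and f: "C4beta_loc f \<beta>" and e: "0 < \<eta>"
    and V1: "C31_on L V1" and V2: "C31_on L V2"
    and lip1: "lipschitz_on l1 {0..L} V1" and lip2: "lipschitz_on l2 {0..L} V2"
    and d10: "prob_density L r10" and d20: "prob_density L r20"
    and N: "integral {0..L} (\<lambda>x. (r10 x + r20 x) powr (-\<theta>)) = N"
    and sol: "classical_solution L T f \<eta> V1 V2 r10 r20 r1 r2"
  defines "p \<equiv> (\<alpha> - 1 - \<theta>) / 2"
  defines "c \<equiv> \<theta> * (\<theta> + 1) / (2 * \<alpha> * \<kappa> * p^2)"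
  defines "A \<equiv> \<theta> * (\<theta> + 1) * (\<bar>l1\<bar> + \<bar>l2\<bar>)^2 * \<alpha> * \<kappa> / 2"
  defines "M \<equiv> (\<bar>N\<bar> + L) * exp (A * T)"
  shows "(SUP t\<in>{0..T}. integral {0..L} (\<lambda>x. (r1 t x + r2 t x) powr (-\<theta>)))
    + sqrt (integral {0..T} (\<lambda>t. integral {0..L} (\<lambda>x.
        (Dx L (\<lambda>s y. (r1 s y + r2 s y) powr ((\<alpha> - 1 - \<theta>) / 2)) t x)\<^sup>2)))
    \<le> M + sqrt ((\<bar>N\<bar> + A * M * T) / c)"
proof -
  have th: "\<theta> > 0" using th2 al by simp
  have reg1: "classical_reg L T r1" and reg2: "classical_reg L T r2"
    and pos: "\<forall>t\<in>{0..T}. \<forall>x\<in>{0..L}. r1 t x + r2 t x > 0"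
    and init: "\<forall>x\<in>{0..L}. r1 0 x = r10 x \<and> r2 0 x = r20 x"
    and comp1: "component_eq L T f \<eta> V1 r1 r1 r2" and comp2: "component_eq L T f \<eta> V2 r2 r1 r2"
    using sol unfolding classical_solution_def by auto
  have nn1: "\<forall>t\<in>{0..T}. \<forall>x\<in>{0..L}. r1 t x \<ge> 0"
    by (rule nonneg_sol[OF L T f V1 e reg1 reg2 pos reg1 comp1]) (use init d10 in \<open>auto simp: prob_density_def\<close>)
  have nn2: "\<forall>t\<in>{0..T}. \<forall>x\<in>{0..L}. r2 t x \<ge> 0"
    by (rule nonneg_sol[OF L T f V2 e reg1 reg2 pos reg2 comp2]) (use init d20 in \<open>auto simp: prob_density_def\<close>)
  note PF1 = pressure_facts[OF L f V1 reg1 reg2 pos] and PF2 = pressure_facts[OF L f V2 reg1 reg2 pos]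
  note R1 = reg_facts[OF reg1] and R2 = reg_facts[OF reg2]
  note VF1 = V_facts[OF V1] and VF2 = V_facts[OF V2] and FF = f_facts[OF f]
  have l1: "l1 \<ge> 0" and l2: "l2 \<ge> 0" using lip1 lip2 by (auto simp: lipschitz_on_def)
  have dV1: "\<bar>dX L V1 x\<bar> \<le> l1" if "x \<in> {0..L}" for x
    by (rule lip_deriv_bound[OF lip1 L that]) (use VF1(1) that in auto)
  have dV2: "\<bar>dX L V2 x\<bar> \<le> l2" if "x \<in> {0..L}" for x
    by (rule lip_deriv_bound[OF lip2 L that]) (use VF2(1) that in auto)

  define l where "l = \<bar>l1\<bar> + \<bar>l2\<bar>"
  have lpos: "l \<ge> 0" by (simp add: l_def)
  have A_eq: "A = \<theta> * (\<theta> + 1) * l^2 * \<alpha> * \<kappa> / 2" by (simp add: A_def l_def)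
  have p0: "p \<noteq> 0" using th al by (simp add: p_def)
  have cpos: "c > 0" using th al ka p0 by (simp add: c_def)
  have Apos: "A \<ge> 0" using th al ka by (simp add: A_def)
  define E where "E t = integral {0..L} (\<lambda>x. (r1 t x + r2 t x) powr (-\<theta>))" for t
  define g1 where "g1 t x = (Dx L (\<lambda>s y. (r1 s y + r2 s y) powr p) t x)\<^sup>2" for t x
  define Df where "Df t = integral {0..L} (g1 t)" for t
  define Pdd where "Pdd s = \<theta> * (\<theta> + 1) * s powr (- \<theta> - 2)" for s :: real
  define J where "J t x = flux L f \<eta> V1 r1 r1 r2 t x + flux L f \<eta> V2 r2 r1 r2 t x" for t x
  define E' where "E' t = integral {0..L} (\<lambda>x. - Pdd (r1 t x + r2 t x) * (Dx L r1 t x + Dx L r2 t x) * J t x)" for t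
  have cs: "continuous_on ({0..T} \<times> {0..L}) (\<lambda>(t,x). r1 t x + r2 t x)"
    using continuous_on_add[OF R1(1) R2(1)] by (simp add: split_beta)
  have csx: "continuous_on ({0..T} \<times> {0..L}) (\<lambda>(t,x). Dx L r1 t x + Dx L r2 t x)"
    using continuous_on_add[OF R1(2) R2(2)] by (simp add: split_beta)
  have cst: "continuous_on ({0..T} \<times> {0..L}) (\<lambda>(t,x). Dt T r1 t x + Dt T r2 t x)"
    using continuous_on_add[OF R1(3) R2(3)] by (simp add: split_beta)
  have cpow: "continuous_on ({0..T} \<times> {0..L}) (\<lambda>(t,x). (r1 t x + r2 t x) powr q)" for q
  proof -
    have "continuous_on ({0..T} \<times> {0..L}) (\<lambda>z. (\<lambda>(t,x). r1 t x + r2 t x) z powr q)"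
      by (rule continuous_on_powr[OF cs continuous_on_const]) (use pos in fastforce)
    then show ?thesis by (simp add: split_beta)
  qed
  have g1eq: "g1 t x = (p * (r1 t x + r2 t x) powr (p - 1) * (Dx L r1 t x + Dx L r2 t x))\<^sup>2"
    if "t \<in> {0..T}" "x \<in> {0..L}" for t x
    unfolding g1_def using Dx_pow[OF L reg1 reg2 pos that] by simp
  have cg1: "continuous_on ({0..T} \<times> {0..L}) (\<lambda>(t,x). g1 t x)"
  proof -
    have "continuous_on ({0..T} \<times> {0..L}) (\<lambda>z. (p * (\<lambda>(t,x). (r1 t x + r2 t x) powr (p - 1)) z
        * (\<lambda>(t,x). Dx L r1 t x + Dx L r2 t x) z)\<^sup>2)"
      by (intro continuous_intros cpow csx)
    then show ?thesis
      by (rule continuous_on_eq) (use g1eq in \<open>auto simp: split_beta\<close>)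
  qed
  have cE: "continuous_on {0..T} E"
    unfolding E_def using integral_continuous_on_param[of "{0..T}" 0 L "\<lambda>t x. (r1 t x + r2 t x) powr (-\<theta>)"] cpow
    by simp
  have cDf: "continuous_on {0..T} Df"
    unfolding Df_def using integral_continuous_on_param[of "{0..T}" 0 L g1] cg1 by simp
  have Dfnn: "Df t \<ge> 0" if "t \<in> {0..T}" for t
    unfolding Df_def
    by (rule integral_nonneg) (use cont_slice[OF cg1 that] in \<open>auto intro: integrable_continuous_real simp: g1_def\<close>)
  have Enn: "E t \<ge> 0" if "t \<in> {0..T}" for t
    unfolding E_def
    by (rule integral_nonneg) (use cont_slice[OF cpow that] in \<open>auto intro: integrable_continuous_real\<close>)
  have E0: "E 0 = N"
    unfolding E_def N[symmetric] by (rule integral_cong) (use init in auto)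
  have Nnn: "N \<ge> 0" using Enn[of 0] E0 T by simp
  have dE: "\<forall>t\<in>{0<..<T}. (E has_real_derivative E' t) (at t)"
  proof
    fix t0 assume t0: "t0 \<in> {0<..<T}"
    then have t0': "t0 \<in> {0..T}" by auto
    show "(E has_real_derivative E' t0) (at t0)"
      unfolding E_def E'_def
    proof (rule energy[where u="\<lambda>t x. r1 t x + r2 t x" and ut="\<lambda>t x. Dt T r1 t x + Dt T r2 t x"
        and S="{0<..}" and Pd="\<lambda>s. - \<theta> * s powr (- \<theta> - 1)" and Pdd=Pdd])
      show "0 < L" by fact
      show "continuous_on ({0..T} \<times> {0..L}) (\<lambda>(t,x). r1 t x + r2 t x)" by (rule cs)
      show "continuous_on ({0..T} \<times> {0..L}) (\<lambda>(t,x). Dt T r1 t x + Dt T r2 t x)" by (rule cst)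
      show "\<forall>t\<in>{0..T}. \<forall>x\<in>{0..L}. ((\<lambda>s. r1 s x + r2 s x) has_real_derivative Dt T r1 t x + Dt T r2 t x) (at t within {0..T})"
        using R1(5) R2(5) by (auto intro!: derivative_eq_intros)
      show "\<forall>t\<in>{0..T}. \<forall>x\<in>{0..L}. r1 t x + r2 t x \<in> {0<..}" using pos by auto
      show "\<forall>s\<in>{0<..}. ((\<lambda>s. s powr (-\<theta>)) has_real_derivative - \<theta> * s powr (- \<theta> - 1)) (at s)"
      proof
        fix s :: real assume "s \<in> {0<..}"
        then have "((\<lambda>s. s powr (-\<theta>)) has_real_derivative (- \<theta>) * s powr (- \<theta> - 1)) (at s)"
          by (intro has_real_derivative_powr) auto
        then show "((\<lambda>s. s powr (-\<theta>)) has_real_derivative - \<theta> * s powr (- \<theta> - 1)) (at s)" by simp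
      qed
      show "\<forall>s\<in>{0<..}. ((\<lambda>s. - \<theta> * s powr (- \<theta> - 1)) has_real_derivative Pdd s) (at s)"
      proof
        fix s :: real assume "s \<in> {0<..}"
        then have "((\<lambda>s. - \<theta> * s powr (- \<theta> - 1)) has_real_derivative - \<theta> * ((- \<theta> - 1) * s powr (- \<theta> - 1 - 1))) (at s)"
          by (intro DERIV_cmult has_real_derivative_powr) auto
        moreover have "- \<theta> * ((- \<theta> - 1) * s powr (- \<theta> - 1 - 1)) = Pdd s"
          by (simp add: Pdd_def algebra_simps)
        ultimately show "((\<lambda>s. - \<theta> * s powr (- \<theta> - 1)) has_real_derivative Pdd s) (at s)" by simp
      qed
      show "continuous_on {0<..} Pdd"
        unfolding Pdd_def by (intro continuous_intros) auto
      show "t0 \<in> {0<..<T}" by fact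
      show "\<forall>x\<in>{0..L}. ((\<lambda>x. r1 t0 x + r2 t0 x) has_real_derivative Dx L r1 t0 x + Dx L r2 t0 x) (at x within {0..L})"
        using R1(4) R2(4) t0' by (auto intro!: derivative_eq_intros)
      show "continuous_on {0..L} (\<lambda>x. Dx L r1 t0 x + Dx L r2 t0 x)"
        using cont_slice[OF csx t0'] by simp
      show "continuous_on {0..L} (J t0)"
        unfolding J_def using flux_cont[OF PF1 reg1 t0'] flux_cont[OF PF2 reg2 t0']
        by (intro continuous_intros)
      show "J t0 0 = 0" "J t0 L = 0"
        unfolding J_def using flux_bdry[OF comp1 t0] flux_bdry[OF comp2 t0] by auto
      show "\<forall>x\<in>{0<..<L}. (J t0 has_real_derivative Dt T r1 t0 x + Dt T r2 t0 x) (at x)"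
        unfolding J_def using flux_deriv[OF comp1 t0] flux_deriv[OF comp2 t0]
        by (auto intro!: DERIV_add)
    qed
  qed
  have ptw: "- Pdd (r1 t x + r2 t x) * (Dx L r1 t x + Dx L r2 t x) * J t x
      \<le> - c * g1 t x + A * ((r1 t x + r2 t x) powr (-\<theta>) + 1)"
    if t: "t \<in> {0..T}" and x: "x \<in> {0..L}" for t x
  proof -
    define sg where "sg = r1 t x + r2 t x"
    define y where "y = Dx L r1 t x + Dx L r2 t x"
    define F where "F = (deriv ^^ 2) f sg"
    define w where "w = r1 t x * dX L V1 x + r2 t x * dX L V2 x"
    have sg: "sg > 0" using pos t x by (simp add: sg_def)
    have Jeq: "J t x = \<eta> * y + sg * F * y + w"
      unfolding J_def flux_eq[OF PF1(1) t x] flux_eq[OF PF2(1) t x] bfun_def sg_def y_def F_def w_def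
      by (simp add: algebra_simps)
    have a1: "r1 t x \<ge> 0" "r2 t x \<ge> 0" using nn1 nn2 t x by auto
    have "\<bar>r1 t x * dX L V1 x\<bar> \<le> r1 t x * \<bar>l1\<bar>"
      using dV1[OF x] a1 by (simp add: abs_mult mult_left_mono)
    moreover have "\<bar>r2 t x * dX L V2 x\<bar> \<le> r2 t x * \<bar>l2\<bar>"
      using dV2[OF x] a1 by (simp add: abs_mult mult_left_mono)
    moreover have "r1 t x * \<bar>l1\<bar> + r2 t x * \<bar>l2\<bar> \<le> l * sg"
      unfolding l_def sg_def using a1 by (simp add: algebra_simps add_mono mult_left_mono)
    ultimately have wb: "\<bar>w\<bar> \<le> l * sg" unfolding w_def by linarith
    have Fb: "1 / (\<alpha> * \<kappa>) * sg powr \<alpha> \<le> sg\<^sup>2 * F"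
      using I2 sg unfolding I2_def F_def by auto
    have "- (\<theta> * (\<theta> + 1) * sg powr (- \<theta> - 2)) * y * (\<eta> * y + sg * F * y + w)
    \<le> - (\<theta> * (\<theta> + 1) / (2 * \<alpha> * \<kappa> * ((\<alpha> - 1 - \<theta>) / 2)^2))
          * (((\<alpha> - 1 - \<theta>) / 2) * sg powr ((\<alpha> - 1 - \<theta>) / 2 - 1) * y)^2
      + (\<theta> * (\<theta> + 1) * l^2 * \<alpha> * \<kappa> / 2) * (sg powr (- \<theta>) + 1)"
      by (rule main_pt[OF sg _ th al ka th2 Fb wb lpos]) (use e in simp)
    then show ?thesis
      unfolding Pdd_def Jeq g1eq[OF t x] c_def A_eq p_def sg_def[symmetric] y_def[symmetric] .
  qed
  have E'le: "E' t \<le> - c * Df t + A * (E t + L)" if t: "t \<in> {0<..<T}" for t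
  proof -
    have t': "t \<in> {0..T}" using t by auto
    have i1: "(\<lambda>x. - Pdd (r1 t x + r2 t x) * (Dx L r1 t x + Dx L r2 t x) * J t x) integrable_on {0..L}"
    proof (rule integrable_continuous_real)
      have c1: "continuous_on {0..L} (\<lambda>x. (r1 t x + r2 t x) powr (- \<theta> - 2))"
        using cont_slice[OF cpow t'] by simp
      have c2: "continuous_on {0..L} (\<lambda>x. Dx L r1 t x + Dx L r2 t x)"
        using cont_slice[OF csx t'] by simp
      have c3: "continuous_on {0..L} (J t)"
        unfolding J_def using flux_cont[OF PF1 reg1 t'] flux_cont[OF PF2 reg2 t']
        by (intro continuous_on_add)
      show "continuous_on {0..L} (\<lambda>x. - Pdd (r1 t x + r2 t x) * (Dx L r1 t x + Dx L r2 t x) * J t x)"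
        unfolding Pdd_def by (intro continuous_on_mult continuous_on_minus continuous_on_const c1 c2 c3)
    qed
    have ig: "g1 t integrable_on {0..L}"
      using cont_slice[OF cg1 t'] by (intro integrable_continuous_real) simp
    have ih: "(\<lambda>x. (r1 t x + r2 t x) powr (-\<theta>)) integrable_on {0..L}"
      using cont_slice[OF cpow t'] by (intro integrable_continuous_real) simp
    have ih1: "(\<lambda>x. (r1 t x + r2 t x) powr (-\<theta>) + 1) integrable_on {0..L}"
      using ih by (intro integrable_add) auto
    have ia: "(\<lambda>x. - c * g1 t x) integrable_on {0..L}" by (rule int_cm[OF ig])
    have ib: "(\<lambda>x. A * ((r1 t x + r2 t x) powr (-\<theta>) + 1)) integrable_on {0..L}" by (rule int_cm[OF ih1])
    have i2: "(\<lambda>x. - c * g1 t x + A * ((r1 t x + r2 t x) powr (-\<theta>) + 1)) integrable_on {0..L}"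
      by (rule integrable_add[OF ia ib])
    have "E' t \<le> integral {0..L} (\<lambda>x. - c * g1 t x + A * ((r1 t x + r2 t x) powr (-\<theta>) + 1))"
      unfolding E'_def by (rule integral_le[OF i1 i2]) (rule ptw[OF t'])
    also have "\<dots> = integral {0..L} (\<lambda>x. - c * g1 t x) + integral {0..L} (\<lambda>x. A * ((r1 t x + r2 t x) powr (-\<theta>) + 1))"
      by (rule integral_add[OF ia ib])
    also have "\<dots> = - c * Df t + A * integral {0..L} (\<lambda>x. (r1 t x + r2 t x) powr (-\<theta>) + 1)"
      by (simp add: Df_def)
    also have "integral {0..L} (\<lambda>x. (r1 t x + r2 t x) powr (-\<theta>) + 1) = E t + L"
      using integral_add[OF ih integrable_const_ivl[of 1 0 L]] L by (simp add: E_def)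
    finally show ?thesis .
  qed
  have EM: "E t + L \<le> M" if t: "t \<in> {0..T}" for t
  proof -
    have le: "\<forall>t\<in>{0<..<T}. E' t \<le> A * (E t + L)"
    proof
      fix t assume "t \<in> {0<..<T}"
      then have "Df t \<ge> 0" using Dfnn[of t] by auto
      then have "c * Df t \<ge> 0" using cpos by simp
      then show "E' t \<le> A * (E t + L)" using E'le[OF \<open>t \<in> {0<..<T}\<close>] by linarith
    qed
    have "E t + L \<le> (E 0 + L) * exp (A * t)" by (rule gronwall[OF cE dE le t])
    also have "\<dots> \<le> (E 0 + L) * exp (A * T)"
    proof (rule mult_left_mono)
      have "A * t \<le> A * T" using t Apos by (intro mult_left_mono) auto
      then show "exp (A * t) \<le> exp (A * T)" by simp
      show "0 \<le> E 0 + L" using E0 Nnn L by simp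
    qed
    finally show ?thesis using E0 Nnn by (simp add: M_def)
  qed
  have diss: "E T + c * integral {0..T} Df \<le> E 0 + (A * M) * T"
  proof (rule dissip[OF cE dE cDf _ ])
    show "\<forall>t\<in>{0<..<T}. E' t + c * Df t \<le> A * M"
    proof
      fix t assume t: "t \<in> {0<..<T}"
      have "E' t + c * Df t \<le> A * (E t + L)" using E'le[OF t] by simp
      also have "\<dots> \<le> A * M" using EM[of t] t Apos by (intro mult_left_mono) simp_all
      finally show "E' t + c * Df t \<le> A * M" .
    qed
  qed (use T in auto)
  have intD: "integral {0..T} Df \<le> (\<bar>N\<bar> + A * M * T) / c"
  proof -
    have ET: "E T \<ge> 0" using Enn[of T] T by simp
    have "c * integral {0..T} Df \<le> \<bar>N\<bar> + A * M * T" using diss E0 ET Nnn by linarith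
    then have "integral {0..T} Df * c \<le> \<bar>N\<bar> + A * M * T" by (simp add: mult.commute)
    then show ?thesis using cpos by (subst pos_le_divide_eq) auto
  qed
  have supE: "(SUP t\<in>{0..T}. E t) \<le> M"
  proof (rule cSUP_least)
    show "{0..T} \<noteq> {}" using T by simp
    fix t assume "t \<in> {0..T}"
    then show "E t \<le> M" using EM[of t] L by linarith
  qed
  have "sqrt (integral {0..T} Df) \<le> sqrt ((\<bar>N\<bar> + A * M * T) / c)"
    using intD by (rule real_sqrt_le_mono)
  with supE have "(SUP t\<in>{0..T}. E t) + sqrt (integral {0..T} Df) \<le> M + sqrt ((\<bar>N\<bar> + A * M * T) / c)"
    by (rule add_mono)
  then show ?thesis unfolding E_def Df_def g1_def p_def .
qed

theorem theorem4p2: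
  fixes \<alpha> \<kappa> \<theta> L T N l1 l2 :: real
  assumes "0 < L" and "0 < T" and "1 - \<alpha> < \<theta>"
  shows "\<exists>K>0. \<forall>f \<eta> V1 V2 r10 r20 r1 r2.
    f_hyp L \<alpha> \<kappa> f \<and>
    (\<exists>\<beta>. 0 < \<beta> \<and> \<beta> \<le> 1 \<and> C4beta_loc f \<beta>) \<and> (\<forall>s>0. (deriv ^^ 2) f s \<ge> 0) \<and>
    0 < \<eta> \<and> \<eta> \<le> 1 \<and>
    C31_on L V1 \<and> C31_on L V2 \<and>
    dX L V1 0 = 0 \<and> dX L V1 L = 0 \<and> dX L V2 0 = 0 \<and> dX L V2 L = 0 \<and>
    lipschitz_on l1 {0..L} V1 \<and> lipschitz_on l2 {0..L} V2 \<and>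
    C31_on L r10 \<and> C31_on L r20 \<and> prob_density L r10 \<and> prob_density L r20 \<and>
    (\<forall>x\<in>{0..L}. r10 x + r20 x > 0) \<and>
    compat0 L f \<eta> V1 V2 r10 r20 \<and> compat1 L f \<eta> V1 V2 r10 r20 \<and>
    (\<lambda>x. (r10 x + r20 x) powr (-\<theta>)) integrable_on {0..L} \<and>
    integral {0..L} (\<lambda>x. (r10 x + r20 x) powr (-\<theta>)) = N \<and>
    classical_solution L T f \<eta> V1 V2 r10 r20 r1 r2
    \<longrightarrow>
    (SUP t\<in>{0..T}. integral {0..L} (\<lambda>x. (r1 t x + r2 t x) powr (-\<theta>)))
    + sqrt (integral {0..T} (\<lambda>t. integral {0..L} (\<lambda>x.
        (Dx L (\<lambda>s y. (r1 s y + r2 s y) powr ((\<alpha> - 1 - \<theta>) / 2)) t x)\<^sup>2)))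
    < K"
proof -
  define p where "p = (\<alpha> - 1 - \<theta>) / 2"
  define c where "c = \<theta> * (\<theta> + 1) / (2 * \<alpha> * \<kappa> * p^2)"
  define A where "A = \<theta> * (\<theta> + 1) * (\<bar>l1\<bar> + \<bar>l2\<bar>)^2 * \<alpha> * \<kappa> / 2"
  define M where "M = (\<bar>N\<bar> + L) * exp (A * T)"
  define Q where "Q = sqrt ((\<bar>N\<bar> + A * M * T) / c)"
  have M0: "M \<ge> 0" using assms(1) by (simp add: M_def)
  show ?thesis
  proof (intro exI[of _ "M + \<bar>Q\<bar> + 1"] conjI allI impI)
    show "0 < M + \<bar>Q\<bar> + 1" using M0 by simp
    fix f \<eta> V1 V2 r10 r20 r1 r2
    assume H: "f_hyp L \<alpha> \<kappa> f \<and>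
    (\<exists>\<beta>. 0 < \<beta> \<and> \<beta> \<le> 1 \<and> C4beta_loc f \<beta>) \<and> (\<forall>s>0. (deriv ^^ 2) f s \<ge> 0) \<and>
    0 < \<eta> \<and> \<eta> \<le> 1 \<and>
    C31_on L V1 \<and> C31_on L V2 \<and>
    dX L V1 0 = 0 \<and> dX L V1 L = 0 \<and> dX L V2 0 = 0 \<and> dX L V2 L = 0 \<and>
    lipschitz_on l1 {0..L} V1 \<and> lipschitz_on l2 {0..L} V2 \<and>
    C31_on L r10 \<and> C31_on L r20 \<and> prob_density L r10 \<and> prob_density L r20 \<and>
    (\<forall>x\<in>{0..L}. r10 x + r20 x > 0) \<and>
    compat0 L f \<eta> V1 V2 r10 r20 \<and> compat1 L f \<eta> V1 V2 r10 r20 \<and>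
    (\<lambda>x. (r10 x + r20 x) powr (-\<theta>)) integrable_on {0..L} \<and>
    integral {0..L} (\<lambda>x. (r10 x + r20 x) powr (-\<theta>)) = N \<and>
    classical_solution L T f \<eta> V1 V2 r10 r20 r1 r2"
    have fh: "f_hyp L \<alpha> \<kappa> f" using H by blast
    have e: "0 < \<eta>" using H by blast
    have V1: "C31_on L V1" using H by blast
    have V2: "C31_on L V2" using H by blast
    have lip1: "lipschitz_on l1 {0..L} V1" using H by blast
    have lip2: "lipschitz_on l2 {0..L} V2" using H by blast
    have d10: "prob_density L r10" using H by blast
    have d20: "prob_density L r20" using H by blast
    have N: "integral {0..L} (\<lambda>x. (r10 x + r20 x) powr (-\<theta>)) = N" using H by blast
    have sol: "classical_solution L T f \<eta> V1 V2 r10 r20 r1 r2" using H by blast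
    have "\<exists>\<beta>. 0 < \<beta> \<and> \<beta> \<le> 1 \<and> C4beta_loc f \<beta>" using H by blast
    then obtain \<beta> where f: "C4beta_loc f \<beta>" by blast
    have al: "0 < \<alpha>" "\<alpha> \<le> 1" and ka: "0 < \<kappa>" and I2: "I2 \<alpha> \<kappa> f"
    proof -
      have "((H1 \<alpha> f \<or> (H2 f \<and> \<alpha> = 1)) \<and> 0 < \<kappa> \<and> I2 \<alpha> \<kappa> f \<and> I3 \<kappa> f) \<or> Hyp2 L \<alpha> \<kappa> f"
        using fh unfolding f_hyp_def .
      then have "0 < \<alpha> \<and> \<alpha> \<le> 1 \<and> 0 < \<kappa> \<and> I2 \<alpha> \<kappa> f"
      proof
        assume a: "(H1 \<alpha> f \<or> (H2 f \<and> \<alpha> = 1)) \<and> 0 < \<kappa> \<and> I2 \<alpha> \<kappa> f \<and> I3 \<kappa> f"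
        then have "H1 \<alpha> f \<or> \<alpha> = 1" by blast
        then have "0 < \<alpha> \<and> \<alpha> \<le> 1" unfolding H1_def by auto
        then show ?thesis using a by blast
      next
        assume "Hyp2 L \<alpha> \<kappa> f"
        then show ?thesis unfolding Hyp2_def by simp
      qed
      then show "0 < \<alpha>" "\<alpha> \<le> 1" "0 < \<kappa>" "I2 \<alpha> \<kappa> f" by auto
    qed
    have "(SUP t\<in>{0..T}. integral {0..L} (\<lambda>x. (r1 t x + r2 t x) powr (-\<theta>)))
    + sqrt (integral {0..T} (\<lambda>t. integral {0..L} (\<lambda>x.
        (Dx L (\<lambda>s y. (r1 s y + r2 s y) powr ((\<alpha> - 1 - \<theta>) / 2)) t x)\<^sup>2))) \<le> M + Q"
      unfolding M_def Q_def c_def A_def p_def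
      by (rule main_est[OF assms(1,2,3) al ka I2 f e V1 V2 lip1 lip2 d10 d20 N sol])
    then show "(SUP t\<in>{0..T}. integral {0..L} (\<lambda>x. (r1 t x + r2 t x) powr (-\<theta>)))
    + sqrt (integral {0..T} (\<lambda>t. integral {0..L} (\<lambda>x.
        (Dx L (\<lambda>s y. (r1 s y + r2 s y) powr ((\<alpha> - 1 - \<theta>) / 2)) t x)\<^sup>2))) < M + \<bar>Q\<bar> + 1"
      by linarith
  qed
qed

end
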